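(* Let $p>p_0\ge1$, $f_n\in C[0,1]^p$, and suppose there exist $\widetilde f_n\in C[0,1]^{p_0}$ and $\eta_n>0$ with $\sup_{\mathbf{x}\in[0,1]^p}|f_n(\mathbf{x})-\widetilde f_n(x_1,\ldots,x_{p_0})|<\eta_n$, and a positive constant $\tau$ with $|\int_{[0,1]^p}x_jf_n(\mathbf{x})d\mathbf{x}-\frac12\int_{[0,1]^p}f_n(\mathbf{x})d\mathbf{x}|>\tau$ for each $j=1,\ldots,p_0$. Then for every $\mathcal{A}\subset Z_p$, $$\beta_{Z_p}(\mathcal{A})_j=12\left(\int_{[0,1]^p}x_jf_n(\mathbf{x})d\mathbf{x}-\frac12\int_{[0,1]^p}f_n(\mathbf{x})d\mathbf{x}\right),\quad j\in\mathcal{A},$$ $$\beta_0(\mathcal{A})=\int_{[0,1]^p}f_n(\mathbf{x})d\mathbf{x}-\sum_{j\in\mathcal{A}}\beta_{Z_p}(\mathcal{A})_j/2.$$ Furthermore, $|\beta_{Z_p}(\mathcal{A})_j|>12\tau$ for $j\in\mathcal{A}\cap\mathcal{A}_0$ and $|\beta_{Z_p}(\mathcal{A})_j|<12\eta_n$ for $j\in\mathcal{A}\setminus\mathcal{A}_0$.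
   Context: $Z_d=\{1,\ldots,d\}$, $\mathcal{A}_0=Z_{p_0}$. For $\mathcal{A}\subset Z_p$ and $\mathbf{x}\in[0,1]^p$, $\mathbf{x}_{\mathcal{A}}$ is the subvector of coordinates in $\mathcal{A}$. $(\beta_0(\mathcal{A}),\boldsymbol\beta(\mathcal{A})')'\in\mathbb{R}\times\mathbb{R}^{|\mathcal{A}|}$ minimizes $\int_{[0,1]^p}[f_n(\mathbf{x})-\phi_0-\boldsymbol\phi'\mathbf{x}_{\mathcal{A}}]^2d\mathbf{x}$ over $(\phi_0,\boldsymbol\phi)$, and $\boldsymbol\beta_{Z_p}(\mathcal{A})=(\beta_{Z_p}(\mathcal{A})_1,\ldots,\beta_{Z_p}(\mathcal{A})_p)'$ is the $p$-vector whose coordinates indexed by $\mathcal{A}$ equal $\boldsymbol\beta(\mathcal{A})$ and whose other coordinates are $0$. *)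

theory Defs
  imports "HOL-Probability.Probability"
begin

text \<open>Points of [0,1]^p are represented as extensional functions on the index set Z_p = {1..p}.\<close>

definition cube :: "nat \<Rightarrow> (nat \<Rightarrow> real) set" where
  "cube p = PiE {1..p} (\<lambda>_. {0..1})"

definition cubeM :: "nat \<Rightarrow> (nat \<Rightarrow> real) measure" where
  "cubeM p = PiM {1..p} (\<lambda>_. restrict_space lborel {0..1})"

definition lsq_risk :: "((nat \<Rightarrow> real) \<Rightarrow> real) \<Rightarrow> nat \<Rightarrow> nat set \<Rightarrow> real \<Rightarrow> (nat \<Rightarrow> real) \<Rightarrow> real" where
  "lsq_risk f p A c0 c = (\<integral>x. (f x - c0 - (\<Sum>j\<in>A. c j * x j))\<^sup>2 \<partial>cubeM p)"

text \<open>(b0, b) is (beta_0(A), beta_{Z_p}(A)): b minimizes the risk over coefficients indexed by A,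
  and b vanishes outside A.\<close>
definition is_lsq_coef :: "((nat \<Rightarrow> real) \<Rightarrow> real) \<Rightarrow> nat \<Rightarrow> nat set \<Rightarrow> real \<Rightarrow> (nat \<Rightarrow> real) \<Rightarrow> bool" where
  "is_lsq_coef f p A b0 b \<longleftrightarrow>
     (\<forall>j. j \<notin> A \<longrightarrow> b j = 0) \<and> (\<forall>c0 c. lsq_risk f p A b0 b \<le> lsq_risk f p A c0 c)"

end

theory Submission
  imports Defs
begin


abbreviation U :: "real measure" where "U \<equiv> restrict_space lborel {0..1}"

lemma prob_U: "prob_space U"
  by (rule prob_spaceI) (simp add: space_restrict_space emeasure_restrict_space)

lemma prob_cubeM: "prob_space (cubeM p)"
  unfolding cubeM_def by (rule prob_space_PiM) (rule prob_U)

lemma space_cubeM: "space (cubeM p) = cube p"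
  by (simp add: cubeM_def cube_def space_PiM space_restrict_space)

lemma comp_meas: "(\<lambda>x. x i) \<in> borel_measurable (cubeM p)"
proof (cases "i \<in> {1..p}")
  case True
  have "(\<lambda>x. x i) \<in> measurable (cubeM p) U" unfolding cubeM_def
    using True by (rule measurable_component_singleton)
  then show ?thesis
    using measurable_restrict_space2_iff by (metis measurable_lborel1)
next
  case False
  have "(\<lambda>x::nat\<Rightarrow>real. undefined::real) \<in> borel_measurable (cubeM p)" by simp
  then show ?thesis
    by (rule measurable_cong[THEN iffD1, rotated]) (use False in \<open>auto simp: space_cubeM cube_def\<close>)
qed

lemma id_meas: "(\<lambda>x. x) \<in> borel_measurable (cubeM p)"
  by (rule measurable_coordinatewise_then_product) (rule comp_meas)

lemma cont_meas:
  assumes "continuous_on (cube p) f"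
  shows "f \<in> borel_measurable (cubeM p)"
proof -
  have "(\<lambda>x. x) \<in> measurable (cubeM p) (restrict_space borel (cube p))"
    by (rule measurable_restrict_space2) (auto simp: space_cubeM intro: id_meas)
  from measurable_comp[OF this borel_measurable_continuous_on_restrict[OF assms]]
  show ?thesis by (simp add: comp_def)
qed

lemma cube_alt: "cube p = PiE UNIV (\<lambda>i. if i \<in> {1..p} then {0..1} else {undefined})"
  by (auto simp: cube_def PiE_def extensional_def Pi_def split: if_splits)

lemma compact_cube: "compact (cube p)"
proof -
  have "compactin (product_topology (\<lambda>i. euclidean) UNIV) (cube p)"
    unfolding cube_alt compactin_PiE by auto
  then show ?thesis by (simp add: euclidean_product_topology compactin_euclidean_iff)
qed



lemma U_meas: "continuous_on {0..1} h \<Longrightarrow> (h::real\<Rightarrow>real) \<in> borel_measurable U"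
proof -
  assume c: "continuous_on {0..1} h"
  have "sets U = sets (restrict_space borel {0..1::real})"
    by (rule sets_restrict_space_cong) simp
  then show ?thesis using borel_measurable_continuous_on_restrict[OF c]
    using measurable_cong_sets by blast
qed

lemma U_int: "continuous_on {0..1} h \<Longrightarrow> integrable U (h::real\<Rightarrow>real)"
proof -
  assume c: "continuous_on {0..1} h"
  interpret prob_space U by (rule prob_U)
  obtain B where "\<forall>y\<in>{0..1}. norm (h y) \<le> B"
    using compact_imp_bounded[OF compact_continuous_image[OF c compact_Icc]]
    by (auto simp: bounded_iff)
  then show ?thesis
    by (intro integrable_const_bound[of _ B] U_meas c) (auto simp: space_restrict_space)
qed

lemma U_integral: "continuous_on {0..1} h \<Longrightarrow> integral\<^sup>L U h = integral {0..1} (h::real\<Rightarrow>real)"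
proof -
  assume c: "continuous_on {0..1} h"
  have "integral\<^sup>L U h = (LINT x:{0..1}|lborel. h x)"
    by (subst integral_restrict_space) (auto simp: set_lebesgue_integral_def)
  also have "\<dots> = integral {0..1} h"
    by (rule set_borel_integral_eq_integral(2)[OF borel_integrable_atLeastAtMost'[OF c]])
  finally show ?thesis .
qed

lemma U_c: "integral\<^sup>L U (\<lambda>y. y - 1/2) = 0"
proof -
  have "((\<lambda>y::real. y - 1/2) has_integral ((1-1/2)^2/2 - (0-1/2)^2/2)) {0..1::real}"
    by (rule fundamental_theorem_of_calculus) (auto intro!: derivative_eq_intros simp: has_real_derivative_iff_has_vector_derivative[symmetric])
  then show ?thesis by (subst U_integral) (auto intro!: continuous_intros dest: integral_unique)
qed

lemma U_c2: "integral\<^sup>L U (\<lambda>y. (y - 1/2)^2) = 1/12"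
proof -
  have "((\<lambda>y::real. (y - 1/2)^2) has_integral ((1-1/2)^3/3 - (0-1/2)^3/3)) {0..1::real}"
    by (rule fundamental_theorem_of_calculus) (auto intro!: derivative_eq_intros simp: has_real_derivative_iff_has_vector_derivative[symmetric] power2_eq_square)
  then have "integral {0..1} (\<lambda>y::real. (y - 1/2)^2) = 2 * (1/2)^3/3" by (simp add: integral_unique)
  also have "(2 * (1/2)^3/3::real) = 1/12" by (simp add: power_divide)
  finally have "integral {0..1} (\<lambda>y::real. (y - 1/2)^2) = 1/12" .
  then show ?thesis by (subst U_integral) (auto intro!: continuous_intros)
qed

lemma PPS: "product_prob_space (\<lambda>_::nat. U)"
  using prob_U by (simp add: product_prob_space_def product_prob_space_axioms_def product_sigma_finite_def prob_space_imp_sigma_finite)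

lemma cube_int1:
  fixes h :: "real \<Rightarrow> real"
  assumes i: "i \<in> {1..p}" and c: "continuous_on {0..1} h"
  shows "(\<integral>x. h (x i) \<partial>cubeM p) = integral\<^sup>L U h"
proof -
  interpret product_prob_space "\<lambda>_::nat. U" by (rule PPS)
  have "(\<integral>x. (\<Prod>l\<in>{1..p}. (if l = i then h else (\<lambda>_. 1)) (x l)) \<partial>cubeM p)
      = (\<Prod>l\<in>{1..p}. integral\<^sup>L U (if l = i then h else (\<lambda>_. 1)))"
    unfolding cubeM_def by (rule product_integral_prod) (auto intro: U_int c)
  moreover have "(\<Prod>l\<in>{1..p}. (if l = i then h else (\<lambda>_. 1)) (x l)) = h (x i)" for x
  proof -
    have "(\<Prod>l\<in>{1..p}. (if l = i then h else (\<lambda>_. 1)) (x l)) = (\<Prod>l\<in>{1..p}. if l = i then h (x l) else 1)"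
      by (rule prod.cong) auto
    then show ?thesis using i by simp
  qed
  moreover have "(\<Prod>l\<in>{1..p}. integral\<^sup>L U (if l = i then h else (\<lambda>_. 1))) = integral\<^sup>L U h"
    using i prob_space.prob_space[OF prob_U] by (simp add: if_distrib prod.delta cong: if_cong)
  ultimately show ?thesis by simp
qed

lemma cube_int2:
  fixes h h' :: "real \<Rightarrow> real"
  assumes i: "i \<in> {1..p}" and k: "k \<in> {1..p}" and ik: "i \<noteq> k"
    and c: "continuous_on {0..1} h" and c': "continuous_on {0..1} h'"
  shows "(\<integral>x. h (x i) * h' (x k) \<partial>cubeM p) = integral\<^sup>L U h * integral\<^sup>L U h'"
proof -
  interpret product_prob_space "\<lambda>_::nat. U" by (rule PPS)
  let ?F = "\<lambda>l. if l = i then h else if l = k then h' else (\<lambda>_. 1)"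
  have "(\<integral>x. (\<Prod>l\<in>{1..p}. ?F l (x l)) \<partial>cubeM p)
      = (\<Prod>l\<in>{1..p}. integral\<^sup>L U (?F l))"
    unfolding cubeM_def by (rule product_integral_prod) (auto intro: U_int c c')
  moreover have G: "(\<Prod>l\<in>{1..p}. G l) = G i * G k" if "\<And>l. l \<notin> {i,k} \<Longrightarrow> G l = 1" for G :: "nat \<Rightarrow> real"
  proof -
    have "(\<Prod>l\<in>{1..p}. G l) = (\<Prod>l\<in>{i,k}. G l)"
      by (rule prod.mono_neutral_right) (use i k that in auto)
    then show ?thesis using ik by simp
  qed
  moreover have "(\<Prod>l\<in>{1..p}. ?F l (x l)) = h (x i) * h' (x k)" for x
    by (subst G) (use ik in auto)
  moreover have "(\<Prod>l\<in>{1..p}. integral\<^sup>L U (?F l)) = integral\<^sup>L U h * integral\<^sup>L U h'"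
    by (subst G) (use ik prob_space.prob_space[OF prob_U] in auto)
  ultimately show ?thesis using ik by simp
qed



lemma cont_int:
  assumes "continuous_on (cube p) h"
  shows "integrable (cubeM p) (h :: _ \<Rightarrow> real)"
proof -
  interpret prob_space "cubeM p" by (rule prob_cubeM)
  obtain B where "\<forall>y\<in>cube p. norm (h y) \<le> B"
    using compact_imp_bounded[OF compact_continuous_image[OF assms compact_cube]]
    by (auto simp: bounded_iff)
  then show ?thesis
    by (intro integrable_const_bound[of _ B] cont_meas assms) (auto simp: space_cubeM)
qed

lemma E1: "j \<in> {1..p} \<Longrightarrow> (\<integral>x. x j - 1/2 \<partial>cubeM p) = 0"
proof -
  assume j: "j \<in> {1..p}"
  have "continuous_on {0..1} (\<lambda>y::real. y - 1/2)" by (intro continuous_intros)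
  from cube_int1[OF j this] U_c show ?thesis by simp
qed

lemma E2: assumes "j \<in> {1..p}" "k \<in> {1..p}"
  shows "(\<integral>x. (x j - 1/2) * (x k - 1/2) \<partial>cubeM p) = (if j = k then 1/12 else 0)"
proof (cases "j = k")
  case True
  then show ?thesis
  proof -
    have "continuous_on {0..1} (\<lambda>y::real. (y - 1/2)^2)" by (intro continuous_intros)
    from cube_int1[OF assms(1) this] U_c2 True show ?thesis by (simp add: power2_eq_square)
  qed
next
  case False
  then show ?thesis
  proof -
    have c: "continuous_on {0..1} (\<lambda>y::real. y - 1/2)" by (intro continuous_intros)
    from cube_int2[OF assms False c c] U_c False show ?thesis by simp
  qed
qed

lemma risk_formula:
  fixes f :: "(nat \<Rightarrow> real) \<Rightarrow> real"
  assumes fc: "continuous_on (cube p) f" and A: "A \<subseteq> {1..p}"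
  shows "lsq_risk f p A c0 c =
     (\<integral>x. (f x)^2 \<partial>cubeM p)
     - 2 * ((c0 + (\<Sum>j\<in>A. c j / 2)) * (\<integral>x. f x \<partial>cubeM p) + (\<Sum>j\<in>A. c j * (\<integral>x. (x j - 1/2) * f x \<partial>cubeM p)))
     + (c0 + (\<Sum>j\<in>A. c j / 2))^2 + (\<Sum>j\<in>A. (c j)^2 / 12)"
proof -
  define d0 where "d0 = c0 + (\<Sum>j\<in>A. c j / 2)"
  define L where "L x = d0 + (\<Sum>j\<in>A. c j * (x j - 1/2))" for x :: "nat \<Rightarrow> real"
  have finA: "finite A" using A finite_subset by blast
  have Lc: "continuous_on (cube p) L" unfolding L_def
    by (intro continuous_intros continuous_on_product_then_coordinatewise continuous_on_id)
  have eq: "(f x - c0 - (\<Sum>j\<in>A. c j * x j))\<^sup>2 = (f x)^2 - 2 * (f x * L x) + (L x)^2" for x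
  proof -
    have "c0 + (\<Sum>j\<in>A. c j * x j) = L x"
      unfolding L_def d0_def by (simp add: sum.distrib algebra_simps sum_subtractf sum_divide_distrib)
    then show ?thesis by (simp add: power2_eq_square algebra_simps)
  qed
  have "lsq_risk f p A c0 c = (\<integral>x. (f x)^2 \<partial>cubeM p) - 2 * (\<integral>x. f x * L x \<partial>cubeM p) + (\<integral>x. (L x)^2 \<partial>cubeM p)"
  proof -
    have i1: "integrable (cubeM p) (\<lambda>x. (f x)^2)" by (intro cont_int continuous_intros fc Lc)
    have i2: "integrable (cubeM p) (\<lambda>x. f x * L x)" by (intro cont_int continuous_intros fc Lc)
    have i3: "integrable (cubeM p) (\<lambda>x. (L x)^2)" by (intro cont_int continuous_intros fc Lc)
    show ?thesis unfolding lsq_risk_def eq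
      by (simp only: Bochner_Integration.integral_add[OF Bochner_Integration.integrable_diff[OF i1 integrable_mult_right[OF i2]] i3]
          Bochner_Integration.integral_diff[OF i1 integrable_mult_right[OF i2]] integral_mult_right_zero)
  qed
  also have "(\<integral>x. f x * L x \<partial>cubeM p) = d0 * (\<integral>x. f x \<partial>cubeM p) + (\<Sum>j\<in>A. c j * (\<integral>x. (x j - 1/2) * f x \<partial>cubeM p))"
  proof -
    have "f x * L x = d0 * f x + (\<Sum>j\<in>A. c j * ((x j - 1/2) * f x))" for x
      unfolding L_def by (simp add: distrib_left sum_distrib_left mult_ac)
    then have "(\<integral>x. f x * L x \<partial>cubeM p) = (\<integral>x. d0 * f x + (\<Sum>j\<in>A. c j * ((x j - 1/2) * f x)) \<partial>cubeM p)"
      by simp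
    also have "\<dots> = d0 * (\<integral>x. f x \<partial>cubeM p) + (\<integral>x. (\<Sum>j\<in>A. c j * ((x j - 1/2) * f x)) \<partial>cubeM p)"
    proof -
      have a: "integrable (cubeM p) (\<lambda>x. d0 * f x)" by (intro cont_int continuous_intros fc)
      have b: "integrable (cubeM p) (\<lambda>x. (\<Sum>j\<in>A. c j * ((x j - 1/2) * f x)))"
        by (intro cont_int continuous_intros fc continuous_on_product_then_coordinatewise continuous_on_id)
      show ?thesis using Bochner_Integration.integral_add[OF a b] by simp
    qed
    also have "(\<integral>x. (\<Sum>j\<in>A. c j * ((x j - 1/2) * f x)) \<partial>cubeM p) = (\<Sum>j\<in>A. c j * (\<integral>x. (x j - 1/2) * f x \<partial>cubeM p))"
    proof -
      have "\<And>j. integrable (cubeM p) (\<lambda>x. c j * ((x j - 1/2) * f x))"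
        by (intro cont_int continuous_intros fc continuous_on_product_then_coordinatewise continuous_on_id)
      then show ?thesis by (simp add: Bochner_Integration.integral_sum)
    qed
    finally show ?thesis .
  qed
  also have "(\<integral>x. (L x)^2 \<partial>cubeM p) = d0^2 + (\<Sum>j\<in>A. (c j)^2 / 12)"
  proof -
    interpret prob_space "cubeM p" by (rule prob_cubeM)
    have ic: "\<And>j k. integrable (cubeM p) (\<lambda>x. (c j * c k) * ((x j - 1/2) * (x k - 1/2)))"
      by (intro cont_int continuous_intros continuous_on_product_then_coordinatewise continuous_on_id)
    have ic1: "\<And>j. integrable (cubeM p) (\<lambda>x. c j * (x j - 1/2))"
      by (intro cont_int continuous_intros continuous_on_product_then_coordinatewise continuous_on_id)
    have "(L x)^2 = d0^2 + 2 * d0 * (\<Sum>j\<in>A. c j * (x j - 1/2)) + (\<Sum>j\<in>A. \<Sum>k\<in>A. (c j * c k) * ((x j - 1/2) * (x k - 1/2)))" for x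
    proof -
      have sq: "(a + b)^2 = a^2 + 2*a*b + b*b" for a b :: real by (simp add: power2_eq_square algebra_simps)
      have "(\<Sum>j\<in>A. c j * (x j - 1/2)) * (\<Sum>j\<in>A. c j * (x j - 1/2)) = (\<Sum>j\<in>A. \<Sum>k\<in>A. (c j * c k) * ((x j - 1/2) * (x k - 1/2)))"
        by (simp add: sum_product mult_ac)
      then show ?thesis unfolding L_def sq by simp
    qed
    then have "(\<integral>x. (L x)^2 \<partial>cubeM p) = (\<integral>x. d0^2 + 2 * d0 * (\<Sum>j\<in>A. c j * (x j - 1/2)) + (\<Sum>j\<in>A. \<Sum>k\<in>A. (c j * c k) * ((x j - 1/2) * (x k - 1/2))) \<partial>cubeM p)"
      by simp
    also have "\<dots> = d0^2 + 2 * d0 * (\<Sum>j\<in>A. c j * (\<integral>x. x j - 1/2 \<partial>cubeM p)) + (\<Sum>j\<in>A. \<Sum>k\<in>A. (c j * c k) * (\<integral>x. (x j - 1/2) * (x k - 1/2) \<partial>cubeM p))"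
    proof -
      have ib: "integrable (cubeM p) (\<lambda>x. 2 * d0 * (\<Sum>j\<in>A. c j * (x j - 1/2)))"
        using ic1 by (intro integrable_mult_right) (simp add: integrable_sum)
      have iS: "integrable (cubeM p) (\<lambda>x. (\<Sum>j\<in>A. \<Sum>k\<in>A. (c j * c k) * ((x j - 1/2) * (x k - 1/2))))"
        using ic by (simp add: integrable_sum)
      have ia: "integrable (cubeM p) (\<lambda>x. d0^2 + 2 * d0 * (\<Sum>j\<in>A. c j * (x j - 1/2)))"
        by (intro Bochner_Integration.integrable_add ib integrable_const)
      have 1: "(\<integral>x. d0^2 + 2 * d0 * (\<Sum>j\<in>A. c j * (x j - 1/2)) + (\<Sum>j\<in>A. \<Sum>k\<in>A. (c j * c k) * ((x j - 1/2) * (x k - 1/2))) \<partial>cubeM p)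
         = (\<integral>x. d0^2 + 2 * d0 * (\<Sum>j\<in>A. c j * (x j - 1/2)) \<partial>cubeM p) + (\<integral>x. (\<Sum>j\<in>A. \<Sum>k\<in>A. (c j * c k) * ((x j - 1/2) * (x k - 1/2))) \<partial>cubeM p)"
        by (rule Bochner_Integration.integral_add[OF ia iS])
      have 2: "(\<integral>x. d0^2 + 2 * d0 * (\<Sum>j\<in>A. c j * (x j - 1/2)) \<partial>cubeM p) = d0^2 + (\<integral>x. 2 * d0 * (\<Sum>j\<in>A. c j * (x j - 1/2)) \<partial>cubeM p)"
        by (subst Bochner_Integration.integral_add[OF integrable_const ib]) (simp add: prob_space)
      have 3: "(\<integral>x. 2 * d0 * (\<Sum>j\<in>A. c j * (x j - 1/2)) \<partial>cubeM p) = 2 * d0 * (\<Sum>j\<in>A. c j * (\<integral>x. x j - 1/2 \<partial>cubeM p))"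
        using ic1 by (simp add: Bochner_Integration.integral_sum)
      have 4: "(\<integral>x. (\<Sum>j\<in>A. \<Sum>k\<in>A. (c j * c k) * ((x j - 1/2) * (x k - 1/2))) \<partial>cubeM p)
          = (\<Sum>j\<in>A. \<Sum>k\<in>A. (c j * c k) * (\<integral>x. (x j - 1/2) * (x k - 1/2) \<partial>cubeM p))"
      proof -
        have "\<And>j. integrable (cubeM p) (\<lambda>x. \<Sum>k\<in>A. (c j * c k) * ((x j - 1/2) * (x k - 1/2)))"
          using ic by (simp add: integrable_sum)
        then show ?thesis using ic by (simp add: Bochner_Integration.integral_sum)
      qed
      show ?thesis unfolding 1 2 3 4 ..
    qed
    also have "\<dots> = d0^2 + (\<Sum>j\<in>A. \<Sum>k\<in>A. (c j * c k) * (if j = k then 1/12 else 0))"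
    proof -
      have "(\<Sum>j\<in>A. c j * (\<integral>x. x j - 1/2 \<partial>cubeM p)) = 0"
        by (rule sum.neutral) (use A E1 in auto)
      moreover have "(\<Sum>j\<in>A. \<Sum>k\<in>A. (c j * c k) * (\<integral>x. (x j - 1/2) * (x k - 1/2) \<partial>cubeM p))
        = (\<Sum>j\<in>A. \<Sum>k\<in>A. (c j * c k) * (if j = k then 1/12 else 0))"
        by (intro sum.cong refl arg_cong2[where f="(*)"] E2) (use A in auto)
      ultimately show ?thesis by simp
    qed
    also have "\<dots> = d0^2 + (\<Sum>j\<in>A. (c j)^2 / 12)"
    proof -
      have "(\<Sum>k\<in>A. (c j * c k) * (if j = k then 1/12 else 0)) = (c j)^2/12" if j: "j \<in> A" for j
      proof -
        have "(\<Sum>k\<in>A. (c j * c k) * (if j = k then 1/12 else 0)) = (\<Sum>k\<in>A. if j = k then c j * c k / 12 else 0)"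
          by (rule sum.cong) auto
        also have "\<dots> = (c j)^2/12" using finA j by (simp add: power2_eq_square)
        finally show ?thesis .
      qed
      then show ?thesis by (intro arg_cong[where f="\<lambda>t. d0^2 + t"] sum.cong refl)
    qed
    finally show ?thesis .
  qed
  finally show ?thesis unfolding d0_def by linarith
qed



lemma upd_cont: "continuous_on S (\<lambda>y::real. x(j := y))"
proof (rule continuous_on_coordinatewise_then_product)
  fix i show "continuous_on S (\<lambda>y. (x(j := y)) i)"
    by (cases "i = j") (simp_all add: continuous_on_id)
qed

lemma inner_bound:
  fixes h :: "real \<Rightarrow> real"
  assumes hc: "continuous_on {0..1} h" and b: "\<And>y. y \<in> {0..1} \<Longrightarrow> \<bar>h y - K\<bar> \<le> s"
  shows "\<bar>\<integral>y. (y - 1/2) * h y \<partial>U\<bar> \<le> s/2"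
proof -
  interpret prob_space U by (rule prob_U)
  have i1: "integrable U (\<lambda>y. (y - 1/2) * (h y - K))" by (intro U_int continuous_intros hc)
  have i2: "integrable U (\<lambda>y. K * (y - 1/2))" by (intro U_int continuous_intros)
  have "(\<integral>y. (y - 1/2) * h y \<partial>U) = (\<integral>y. (y - 1/2) * (h y - K) + K * (y - 1/2) \<partial>U)"
    by (rule Bochner_Integration.integral_cong) (auto simp: field_simps)
  also have "\<dots> = (\<integral>y. (y - 1/2) * (h y - K) \<partial>U)"
    using Bochner_Integration.integral_add[OF i1 i2] U_c by simp
  finally have eq: "(\<integral>y. (y - 1/2) * h y \<partial>U) = (\<integral>y. (y - 1/2) * (h y - K) \<partial>U)" .
  have "\<bar>\<integral>y. (y - 1/2) * (h y - K) \<partial>U\<bar> \<le> (\<integral>y. \<bar>(y - 1/2) * (h y - K)\<bar> \<partial>U)"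
    using integral_norm_bound[of U "\<lambda>y. (y - 1/2) * (h y - K)"] by simp
  also have "\<dots> \<le> s/2"
  proof (rule integral_le_const)
    show "integrable U (\<lambda>y. \<bar>(y - 1/2) * (h y - K)\<bar>)" using i1 by simp
    show "AE y in U. \<bar>(y - 1/2) * (h y - K)\<bar> \<le> s/2"
    proof (rule AE_I2)
      fix y assume "y \<in> space U"
      then have y: "y \<in> {0..1}" by (simp add: space_restrict_space)
      have "\<bar>y - 1/2\<bar> \<le> 1/2" using y unfolding abs_le_iff by auto
      moreover have "\<bar>h y - K\<bar> \<le> s" using b y by auto
      ultimately have "\<bar>y - 1/2\<bar> * \<bar>h y - K\<bar> \<le> 1/2 * s"
        by (intro mult_mono) auto
      then show "\<bar>(y - 1/2) * (h y - K)\<bar> \<le> s/2" by (simp add: abs_mult)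
    qed
  qed
  finally show ?thesis using eq by simp
qed

lemma m_small:
  fixes f g :: "(nat \<Rightarrow> real) \<Rightarrow> real"
  assumes fc: "continuous_on (cube p) f" and j: "j \<in> {1..p}" "p0 < j"
    and b: "\<And>x. x \<in> cube p \<Longrightarrow> \<bar>f x - g (restrict x {1..p0})\<bar> \<le> s"
  shows "\<bar>\<integral>x. (x j - 1/2) * f x \<partial>cubeM p\<bar> \<le> s/2"
proof -
  interpret product_prob_space "\<lambda>_::nat. U" by (rule PPS)
  define I' where "I' = {1..p} - {j}"
  have ins: "insert j I' = {1..p}" using j by (auto simp: I'_def)
  have fin: "finite I'" "j \<notin> I'" by (auto simp: I'_def)
  have int: "integrable (Pi\<^sub>M (insert j I') (\<lambda>_. U)) (\<lambda>x. (x j - 1/2) * f x)"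
    unfolding ins cubeM_def[symmetric]
    by (intro cont_int continuous_intros fc continuous_on_product_then_coordinatewise continuous_on_id)
  have eq: "(\<integral>x. (x j - 1/2) * f x \<partial>cubeM p) = (\<integral>x. (\<integral>y. (y - 1/2) * f (x(j := y)) \<partial>U) \<partial>Pi\<^sub>M I' (\<lambda>_. U))"
    using product_integral_insert[OF fin int] unfolding ins cubeM_def by simp
  have inner: "\<bar>\<integral>y. (y - 1/2) * f (x(j := y)) \<partial>U\<bar> \<le> s/2" if x: "x \<in> space (Pi\<^sub>M I' (\<lambda>_. U))" for x
  proof (rule inner_bound)
    have mem: "x(j := y) \<in> cube p" if "y \<in> {0..1}" for y
      using x that j unfolding cube_def space_PiM space_restrict_space I'_def
      by (auto simp: PiE_iff extensional_def)
    show "continuous_on {0..1} (\<lambda>y. f (x(j := y)))"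
      by (rule continuous_on_compose2[OF fc upd_cont]) (use mem in auto)
    fix y :: real assume y: "y \<in> {0..1}"
    have "restrict (x(j := y)) {1..p0} = restrict x {1..p0}"
      using j by (auto simp: restrict_def fun_eq_iff)
    then show "\<bar>f (x(j := y)) - g (restrict x {1..p0})\<bar> \<le> s"
      using b[OF mem[OF y]] by simp
  qed
  interpret Q: prob_space "Pi\<^sub>M I' (\<lambda>_. U)" by (rule prob_space_PiM) (rule prob_U)
  have s0: "0 \<le> s/2"
  proof -
    have "(\<lambda>i\<in>I'. 0::real) \<in> space (Pi\<^sub>M I' (\<lambda>_. U))"
      by (auto simp: space_PiM space_restrict_space)
    from inner[OF this] show ?thesis by linarith
  qed
  have "\<bar>\<integral>x. (\<integral>y. (y - 1/2) * f (x(j := y)) \<partial>U) \<partial>Pi\<^sub>M I' (\<lambda>_. U)\<bar>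
      \<le> (\<integral>x. \<bar>\<integral>y. (y - 1/2) * f (x(j := y)) \<partial>U\<bar> \<partial>Pi\<^sub>M I' (\<lambda>_. U))"
    using integral_norm_bound[of "Pi\<^sub>M I' (\<lambda>_. U)" "\<lambda>x. (\<integral>y. (y - 1/2) * f (x(j := y)) \<partial>U)"] by simp
  also have "\<dots> \<le> s/2"
  proof (cases "integrable (Pi\<^sub>M I' (\<lambda>_. U)) (\<lambda>x. \<bar>\<integral>y. (y - 1/2) * f (x(j := y)) \<partial>U\<bar>)")
    case True
    then show ?thesis by (rule Q.integral_le_const) (use inner in \<open>auto intro!: AE_I2\<close>)
  next
    case False
    then show ?thesis using s0 by (simp add: not_integrable_integral_eq)
  qed
  finally show ?thesis using eq by simp
qed



lemma bounded_on_cube: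
  assumes "continuous_on (cube p) (f :: _ \<Rightarrow> real)"
  obtains B where "\<And>x. x \<in> cube p \<Longrightarrow> \<bar>f x\<bar> \<le> B"
  using compact_imp_bounded[OF compact_continuous_image[OF assms compact_cube]]
  by (auto simp: bounded_iff)

theorem lemma6:
  fixes p p0 :: nat and f g :: "(nat \<Rightarrow> real) \<Rightarrow> real" and \<eta> \<tau> :: real and A :: "nat set"
  assumes "1 \<le> p0" and "p0 < p"
    and "continuous_on (cube p) f"
    and "continuous_on (cube p0) g"
    and "\<eta> > 0"
    and "(SUP x\<in>cube p. \<bar>f x - g (restrict x {1..p0})\<bar>) < \<eta>"
    and "\<tau> > 0"
    and "\<forall>j\<in>{1..p0}. \<bar>(\<integral>x. x j * f x \<partial>cubeM p) - 1/2 * (\<integral>x. f x \<partial>cubeM p)\<bar> > \<tau>"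
    and "A \<subseteq> {1..p}"
  shows "(\<exists>b0 b. is_lsq_coef f p A b0 b) \<and>
    (\<forall>b0 b. is_lsq_coef f p A b0 b \<longrightarrow>
      (\<forall>j\<in>A. b j = 12 * ((\<integral>x. x j * f x \<partial>cubeM p) - 1/2 * (\<integral>x. f x \<partial>cubeM p))) \<and>
      b0 = (\<integral>x. f x \<partial>cubeM p) - (\<Sum>j\<in>A. b j / 2) \<and>
      (\<forall>j\<in>A \<inter> {1..p0}. \<bar>b j\<bar> > 12 * \<tau>) \<and>
      (\<forall>j\<in>A - {1..p0}. \<bar>b j\<bar> < 12 * \<eta>))"
proof -
  note fc = assms(3) and gc = assms(4) and A = assms(9)
  have finA: "finite A" using A finite_subset by blast
  define \<mu> where "\<mu> = (\<integral>x. f x \<partial>cubeM p)"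
  define m where "m j = (\<integral>x. (x j - 1/2) * f x \<partial>cubeM p)" for j
  define E2 where "E2 = (\<integral>x. (f x)^2 \<partial>cubeM p)"
  define K where "K = E2 - \<mu>^2 - (\<Sum>j\<in>A. 12 * (m j)^2)"
  have m_eq: "m j = (\<integral>x. x j * f x \<partial>cubeM p) - 1/2 * \<mu>" for j
  proof -
    have i1: "integrable (cubeM p) (\<lambda>x. x j * f x)"
      by (intro cont_int continuous_intros fc continuous_on_product_then_coordinatewise continuous_on_id)
    have i2: "integrable (cubeM p) (\<lambda>x. 1/2 * f x)"
      by (intro cont_int continuous_intros fc)
    have "m j = (\<integral>x. x j * f x - 1/2 * f x \<partial>cubeM p)"
      unfolding m_def by (rule Bochner_Integration.integral_cong) (auto simp: algebra_simps)
    also have "\<dots> = (\<integral>x. x j * f x \<partial>cubeM p) - 1/2 * \<mu>"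
      unfolding \<mu>_def Bochner_Integration.integral_diff[OF i1 i2] by simp
    finally show ?thesis .
  qed
  have R: "lsq_risk f p A c0 c = K + (c0 + (\<Sum>j\<in>A. c j / 2) - \<mu>)^2 + (\<Sum>j\<in>A. (c j - 12 * m j)^2 / 12)" for c0 c
  proof -
    have "(\<Sum>j\<in>A. (c j - 12 * m j)^2 / 12) = (\<Sum>j\<in>A. (c j)^2 / 12 - 2 * (c j * m j) + 12 * (m j)^2)"
      by (rule sum.cong) (auto simp: power2_eq_square field_simps)
    also have "\<dots> = (\<Sum>j\<in>A. (c j)^2 / 12) - 2 * (\<Sum>j\<in>A. c j * m j) + (\<Sum>j\<in>A. 12 * (m j)^2)"
      by (simp add: sum.distrib sum_subtractf sum_distrib_left)
    finally have s: "(\<Sum>j\<in>A. (c j - 12 * m j)^2 / 12) = (\<Sum>j\<in>A. (c j)^2 / 12) - 2 * (\<Sum>j\<in>A. c j * m j) + (\<Sum>j\<in>A. 12 * (m j)^2)" .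
    have sq: "(a - b)^2 = a^2 - 2 * a * b + b^2" for a b :: real by (simp add: power2_eq_square algebra_simps)
    have mf: "(\<Sum>j\<in>A. c j * (\<integral>x. (x j - 1/2) * f x \<partial>cubeM p)) = (\<Sum>j\<in>A. c j * m j)"
      by (simp add: m_def)
    show ?thesis unfolding s unfolding risk_formula[OF fc A] mf E2_def[symmetric] \<mu>_def[symmetric] sq K_def
      by (simp add: power2_eq_square algebra_simps)
  qed
  define bs where "bs j = (if j \<in> A then 12 * m j else 0)" for j
  define bs0 where "bs0 = \<mu> - (\<Sum>j\<in>A. bs j / 2)"
  have Rbs: "lsq_risk f p A bs0 bs = K"
  proof -
    have "(\<Sum>j\<in>A. (bs j - 12 * m j)^2 / 12) = 0" by (rule sum.neutral) (auto simp: bs_def)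
    then show ?thesis unfolding R bs0_def by simp
  qed
  have nn: "0 \<le> (\<Sum>j\<in>A. (c j - 12 * m j)^2 / 12)" for c by (rule sum_nonneg) auto
  have ex: "is_lsq_coef f p A bs0 bs"
    unfolding is_lsq_coef_def
  proof (intro conjI allI impI)
    show "bs j = 0" if "j \<notin> A" for j using that by (simp add: bs_def)
    show "lsq_risk f p A bs0 bs \<le> lsq_risk f p A c0 c" for c0 c
      unfolding Rbs unfolding R using nn[of c] zero_le_power2[of "c0 + (\<Sum>j\<in>A. c j / 2) - \<mu>"] by linarith
  qed
  have uniq: "(\<forall>j\<in>A. b j = 12 * m j) \<and> b0 = \<mu> - (\<Sum>j\<in>A. b j / 2)" if h: "is_lsq_coef f p A b0 b" for b0 b
  proof -
    have "lsq_risk f p A b0 b \<le> K" using h Rbs unfolding is_lsq_coef_def by metis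
    then have le: "(b0 + (\<Sum>j\<in>A. b j / 2) - \<mu>)^2 + (\<Sum>j\<in>A. (b j - 12 * m j)^2 / 12) \<le> 0"
      unfolding R by simp
    have z1: "(b0 + (\<Sum>j\<in>A. b j / 2) - \<mu>)^2 = 0" using le nn[of b]
      by (smt (verit) zero_le_power2)
    have z2: "(\<Sum>j\<in>A. (b j - 12 * m j)^2 / 12) = 0" using le nn[of b]
      by (smt (verit) zero_le_power2)
    have "\<forall>j\<in>A. (b j - 12 * m j)^2 / 12 = 0"
      using z2 finA by (subst (asm) sum_nonneg_eq_0_iff) auto
    then have "\<forall>j\<in>A. b j = 12 * m j" by auto
    moreover have "b0 = \<mu> - (\<Sum>j\<in>A. b j / 2)" using z1 by simp
    ultimately show ?thesis by blast
  qed
  define s where "s = (SUP x\<in>cube p. \<bar>f x - g (restrict x {1..p0})\<bar>)"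
  obtain Bf where Bf: "\<And>x. x \<in> cube p \<Longrightarrow> \<bar>f x\<bar> \<le> Bf" using bounded_on_cube[OF fc] by blast
  obtain Bg where Bg: "\<And>x. x \<in> cube p0 \<Longrightarrow> \<bar>g x\<bar> \<le> Bg" using bounded_on_cube[OF gc] by blast
  have rmem: "restrict x {1..p0} \<in> cube p0" if "x \<in> cube p" for x
    using that assms(2) by (auto simp: cube_def PiE_iff)
  have bdd: "bdd_above ((\<lambda>x. \<bar>f x - g (restrict x {1..p0})\<bar>) ` cube p)"
  proof (rule bdd_aboveI2)
    fix x assume "x \<in> cube p"
    with Bf[of x] Bg[OF rmem[of x]] show "\<bar>f x - g (restrict x {1..p0})\<bar> \<le> Bf + Bg" by linarith
  qed
  have sb: "\<bar>f x - g (restrict x {1..p0})\<bar> \<le> s" if "x \<in> cube p" for x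
    unfolding s_def by (rule cSUP_upper[OF that bdd])
  have s\<eta>: "s < \<eta>" using assms(6) by (simp add: s_def)
  show ?thesis
  proof (intro conjI allI impI)
    show "\<exists>b0 b. is_lsq_coef f p A b0 b" using ex by blast
  next
    fix b0 b assume h: "is_lsq_coef f p A b0 b"
    note u = uniq[OF h]
    show "\<forall>j\<in>A. b j = 12 * ((\<integral>x. x j * f x \<partial>cubeM p) - 1/2 * (\<integral>x. f x \<partial>cubeM p))"
      using u m_eq \<mu>_def by simp
    show "b0 = (\<integral>x. f x \<partial>cubeM p) - (\<Sum>j\<in>A. b j / 2)" using u \<mu>_def by simp
    show "\<forall>j\<in>A \<inter> {1..p0}. \<bar>b j\<bar> > 12 * \<tau>"
    proof
      fix j assume j: "j \<in> A \<inter> {1..p0}"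
      then have "\<bar>m j\<bar> > \<tau>" using assms(8) m_eq \<mu>_def by auto
      then show "\<bar>b j\<bar> > 12 * \<tau>" using u j by auto
    qed
    show "\<forall>j\<in>A - {1..p0}. \<bar>b j\<bar> < 12 * \<eta>"
    proof
      fix j assume j: "j \<in> A - {1..p0}"
      then have j': "j \<in> {1..p}" "p0 < j" using A assms(1) by auto
      have "\<bar>m j\<bar> \<le> s/2" unfolding m_def by (rule m_small[OF fc j' sb])
      then show "\<bar>b j\<bar> < 12 * \<eta>" using u j s\<eta> assms(5) by auto
    qed
  qed
qed

end
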